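(* If the joint state space is the minimal tensor product, $\Omega_{AB}=\Omega_A\otimes_{\min}\Omega_B$, then for any set of allowed local transformations on $A$ one has $\chi_{DC}(\Omega_{AB})\le\chi_C(\Omega_A)$; i.e. superdense coding (a state $\phi$ with $\chi_{DC}(\phi)>\chi_C(\Omega_A)$) is impossible.
   Context: Single systems: $\Omega_A\subset\mathbb R^{n_A+1}$, $\Omega_B\subset\mathbb R^{n_B+1}$ are GPT state spaces of the form $\{(1,r)^{\mathrm t}: r\in\mathcal R\}$ with $\mathcal R$ compact convex, unit effects $u_A,u_B=(1,\mathbf 0)^{\mathrm t}$, effect sets $\mathcal E_A=\{e:0\le e\cdot\omega\le1\ \forall\omega\in\Omega_A\}$ (similarly $\mathcal E_B$). Bipartite states are real $(n_A+1)\times(n_B+1)$ matrices, identified with $\mathbb R^{n_A+1}\otimes\mathbb R^{n_B+1}$ via $v\otimes w=vw^{\mathrm t}$, inner product $X\cdot Y=\mathrm{Tr}(X^{\mathrm t}Y)$. $\Omega_A\otimes_{\min}\Omega_B$ is the convex hull of $\{\omega_A\otimes\omega_B:\omega_A\in\Omega_A,\omega_B\in\Omega_B\}$. Effects of a joint state space $\Omega_{AB}$: $\mathcal E_{AB}=\{E:0\le E\cdot\phi\le1\ \forall\phi\in\Omega_{AB}\}$; measurements are finite families in $\mathcal E_{AB}$ summing to $u_A\otimes u_B$. An allowed local transformation on $A$ is a linear map $T$ of $\mathbb R^{n_A+1}$ with $T\Omega_A\subseteq\Omega_A$ and $T\phi\in\Omega_{AB}$ for all $\phi\in\Omega_{AB}$.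 Classical capacity $\chi_C(\Omega_A)$: supremum of $I(X:Y)$ over finite message distributions $p_x$, states $\omega_x\in\Omega_A$ and measurements $\{e_y\}\subset\mathcal E_A$ with $p(y|x)=e_y\cdot\omega_x$. A dense coding protocol with initial state $\phi\in\Omega_{AB}$ consists of a finite message distribution $p_x$, allowed local transformations $T_x$ on $A$, and a measurement $\{E_y\}\subset\mathcal E_{AB}$, with $p(y|x)=E_y\cdot(T_x\phi)$; $\chi_{DC}(\phi)$ is the supremum of $I(X:Y)$ over such protocols and $\chi_{DC}(\Omega_{AB})=\sup_\phi\chi_{DC}(\phi)$. *)

theory Defs
  imports "HOL-Analysis.Analysis"
begin

text \<open>Single-system vectors live in real^('a::finite option): the coordinate None is the
 distinguished first coordinate (the constant 1 of states (1,r)), the coordinates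
 Some i, i :: 'a, form the R^{n} part (n = CARD('a)).  Bipartite states are
 matrices real^('b::finite option)^('a::finite option), rows indexed by system A.  The inner
 product of such matrices is the sum of entrywise products, i.e. Tr(X^t Y).\<close>

definition gpt_state_space :: "(real^'a) set \<Rightarrow> (real^('a::finite option)) set" where
  "gpt_state_space R = {v. v $ None = 1 \<and> (\<chi> i. v $ Some i) \<in> R}"

definition unit_eff :: "real^('a::finite option)" where
  "unit_eff = (\<chi> i. if i = None then 1 else 0)"

definition effects :: "('v::real_inner) set \<Rightarrow> 'v set" where
  "effects \<Omega> = {e. \<forall>\<omega>\<in>\<Omega>. 0 \<le> e \<bullet> \<omega> \<and> e \<bullet> \<omega> \<le> 1}"

definition tens :: "real^'a \<Rightarrow> real^'b \<Rightarrow> real^'b^'a" where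
  "tens v w = (\<chi> i j. v $ i * w $ j)"

definition min_tensor :: "(real^'a) set \<Rightarrow> (real^'b) set \<Rightarrow> (real^'b^'a) set" where
  "min_tensor \<Omega>A \<Omega>B = convex hull {tens a b | a b. a \<in> \<Omega>A \<and> b \<in> \<Omega>B}"

definition is_measurement :: "('v::real_inner) set \<Rightarrow> 'v \<Rightarrow> nat set \<Rightarrow> (nat \<Rightarrow> 'v) \<Rightarrow> bool" where
  "is_measurement \<Omega> u Y e \<longleftrightarrow> finite Y \<and> (\<forall>y\<in>Y. e y \<in> effects \<Omega>) \<and> sum e Y = u"

definition is_distribution :: "nat set \<Rightarrow> (nat \<Rightarrow> real) \<Rightarrow> bool" where
  "is_distribution X p \<longleftrightarrow> finite X \<and> (\<forall>x\<in>X. 0 \<le> p x) \<and> sum p X = 1"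

text \<open>Mutual information I(X:Y) (in bits) of the joint distribution p(x) q(y|x),
  with the convention 0 log 0 = 0.\<close>
definition mutual_info :: "nat set \<Rightarrow> nat set \<Rightarrow> (nat \<Rightarrow> real) \<Rightarrow> (nat \<Rightarrow> nat \<Rightarrow> real) \<Rightarrow> real" where
  "mutual_info X Y p q =
     (\<Sum>x\<in>X. \<Sum>y\<in>Y. if p x * q x y = 0 then 0
        else p x * q x y * log 2 (q x y / (\<Sum>x'\<in>X. p x' * q x' y)))"

definition classical_capacity :: "(real^('a::finite option)) set \<Rightarrow> ereal" where
  "classical_capacity \<Omega> = Sup {ereal (mutual_info X Y p (\<lambda>x y. e y \<bullet> \<omega> x)) | X Y p \<omega> e.
      is_distribution X p \<and> (\<forall>x\<in>X. \<omega> x \<in> \<Omega>) \<and> is_measurement \<Omega> unit_eff Y e}"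

text \<open>Action of a linear map T on system A of a bipartite state (T \<otimes> id).\<close>
definition loc_apply :: "(real^'a \<Rightarrow> real^'a) \<Rightarrow> real^'b^'a \<Rightarrow> real^'b^'a" where
  "loc_apply T \<phi> = (\<chi> i j. T (\<chi> k. \<phi> $ k $ j) $ i)"

definition allowed_local :: "(real^('a::finite option)) set \<Rightarrow> (real^('b::finite option)^('a::finite option)) set
     \<Rightarrow> (real^('a::finite option) \<Rightarrow> real^('a::finite option)) set" where
  "allowed_local \<Omega>A \<Omega>AB = {T. linear T \<and> T ` \<Omega>A \<subseteq> \<Omega>A \<and> (\<forall>\<phi>\<in>\<Omega>AB. loc_apply T \<phi> \<in> \<Omega>AB)}"

definition dense_coding_capacity ::
  "(real^('b::finite option)^('a::finite option)) set \<Rightarrow> (real^('a::finite option) \<Rightarrow> real^('a::finite option)) set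
     \<Rightarrow> real^('b::finite option)^('a::finite option) \<Rightarrow> ereal" where
  "dense_coding_capacity \<Omega>AB TT \<phi> = Sup {ereal (mutual_info X Y p (\<lambda>x y. E y \<bullet> loc_apply (T x) \<phi>)) | X Y p T E.
      is_distribution X p \<and> (\<forall>x\<in>X. T x \<in> TT) \<and> is_measurement \<Omega>AB (tens unit_eff unit_eff) Y E}"

definition dense_coding_capacity_space ::
  "(real^('b::finite option)^('a::finite option)) set \<Rightarrow> (real^('a::finite option) \<Rightarrow> real^('a::finite option)) set \<Rightarrow> ereal" where
  "dense_coding_capacity_space \<Omega>AB TT = (SUP \<phi>\<in>\<Omega>AB. dense_coding_capacity \<Omega>AB TT \<phi>)"

end

theory Submission
  imports Defs
begin

definition hl :: "real \<Rightarrow> real \<Rightarrow> real" where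
  "hl a b = (if a = 0 then 0 else a * ln (a / b))"

lemma hl_pointwise:
  assumes "0 \<le> a" "0 \<le> b" "a \<noteq> 0 \<longrightarrow> b \<noteq> 0" "0 < AA" "0 < BB"
  shows "a * ln (AA/BB) + a - b * AA / BB \<le> hl a b"
proof (cases "a = 0")
  case True
  then show ?thesis using assms by (simp add: hl_def)
next
  case False
  then have a0: "0 < a" using assms by simp
  then have b0: "0 < b" using assms False by simp
  have BB0: "0 < BB" using assms by simp
  have pos: "0 < (b * AA) / (a * BB)" using a0 b0 assms BB0 by simp
  have "ln ((b * AA) / (a * BB)) \<le> (b * AA) / (a * BB) - 1" by (rule ln_le_minus_one[OF pos])
  hence "a * ln ((b * AA) / (a * BB)) \<le> a * ((b * AA) / (a * BB) - 1)"
    using a0 by (simp add: mult_left_mono)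
  also have "\<dots> = b * AA / BB - a" using a0 BB0 by (simp add: field_simps)
  finally have 1: "a * ln ((b * AA) / (a * BB)) \<le> b * AA / BB - a" .
  have lq: "ln ((b * AA) / (a * BB)) = ln (AA/BB) - ln (a/b)"
    using a0 b0 assms BB0 by (simp add: ln_div ln_mult)
  have "a * ln ((b * AA) / (a * BB)) = a * ln (AA/BB) - a * ln (a/b)"
    unfolding lq by (simp add: right_diff_distrib)
  with 1 have "a * ln (AA/BB) - a * ln (a/b) \<le> b * AA / BB - a" by linarith
  then show ?thesis using False by (simp add: hl_def)
qed

lemma log_sum:
  fixes A B :: "'k \<Rightarrow> real"
  assumes "finite K" "\<forall>k\<in>K. 0 \<le> A k \<and> 0 \<le> B k \<and> (A k \<noteq> 0 \<longrightarrow> B k \<noteq> 0)"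
  shows "hl (sum A K) (sum B K) \<le> (\<Sum>k\<in>K. hl (A k) (B k))"
proof (cases "sum A K = 0")
  case True
  have "\<forall>k\<in>K. A k = 0" using True assms sum_nonneg_eq_0_iff by blast
  then show ?thesis using True by (simp add: hl_def)
next
  case False
  have SA: "0 \<le> sum A K" using assms by (simp add: sum_nonneg)
  obtain k0 where k0: "k0 \<in> K" "A k0 \<noteq> 0" using False by (meson sum.neutral)
  have "B k0 \<le> sum B K" by (rule member_le_sum) (use assms k0 in auto)
  hence SAB: "0 < sum B K" using assms k0 by force
  have SA0: "0 < sum A K" using SA False by simp
  let ?AA = "sum A K" and ?BB = "sum B K"
  have "(\<Sum>k\<in>K. A k * ln (?AA/?BB) + A k - B k * ?AA / ?BB) \<le> (\<Sum>k\<in>K. hl (A k) (B k))"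
    by (rule sum_mono) (use assms SA0 SAB hl_pointwise in auto)
  moreover have "(\<Sum>k\<in>K. A k * ln (?AA/?BB) + A k - B k * ?AA / ?BB)
      = ?AA * ln (?AA/?BB) + ?AA - ?BB * ?AA / ?BB"
    by (simp add: sum.distrib sum_subtractf sum_distrib_right sum_divide_distrib[symmetric])
  moreover have "?BB * ?AA / ?BB = ?AA" using SA0 SAB by simp
  ultimately show ?thesis using False by (simp add: hl_def)
qed

lemma hl_scale: "0 \<le> l \<Longrightarrow> hl (l * a) (l * b) = l * hl a b"
  by (cases "l = 0") (auto simp: hl_def)

lemma log_sum_w:
  fixes a b l :: "'k \<Rightarrow> real"
  assumes "finite K" "\<forall>k\<in>K. 0 \<le> l k \<and> 0 \<le> a k \<and> 0 \<le> b k \<and> (a k \<noteq> 0 \<longrightarrow> b k \<noteq> 0)"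
  shows "hl (\<Sum>k\<in>K. l k * a k) (\<Sum>k\<in>K. l k * b k) \<le> (\<Sum>k\<in>K. l k * hl (a k) (b k))"
proof -
  have "hl (\<Sum>k\<in>K. l k * a k) (\<Sum>k\<in>K. l k * b k) \<le> (\<Sum>k\<in>K. hl (l k * a k) (l k * b k))"
    by (rule log_sum) (use assms in \<open>auto intro: mult_left_mono\<close>)
  also have "\<dots> = (\<Sum>k\<in>K. l k * hl (a k) (b k))"
    using assms by (intro sum.cong) (auto simp: hl_scale)
  finally show ?thesis .
qed

lemma MI_alt:
  "mutual_info X Y p q = (\<Sum>x\<in>X. \<Sum>y\<in>Y. hl (p x * q x y) (p x * (\<Sum>x'\<in>X. p x' * q x' y)) / ln 2)"
  unfolding mutual_info_def
  by (intro sum.cong refl) (auto simp: hl_def log_def)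

lemma MI_convex:
  fixes W :: "'k \<Rightarrow> nat \<Rightarrow> nat \<Rightarrow> real"
  assumes "finite X" "finite Y" "finite K" "\<forall>x\<in>X. 0 \<le> p x" "\<forall>k\<in>K. 0 \<le> l k"
    "\<forall>k\<in>K. \<forall>x\<in>X. \<forall>y\<in>Y. 0 \<le> W k x y"
  shows "mutual_info X Y p (\<lambda>x y. \<Sum>k\<in>K. l k * W k x y) \<le> (\<Sum>k\<in>K. l k * mutual_info X Y p (W k))"
proof -
  let ?d = "\<lambda>k y. \<Sum>x'\<in>X. p x' * W k x' y"
  have le: "hl (p x * (\<Sum>k\<in>K. l k * W k x y)) (p x * (\<Sum>x'\<in>X. p x' * (\<Sum>k\<in>K. l k * W k x' y))) / ln 2
     \<le> (\<Sum>k\<in>K. l k * (hl (p x * W k x y) (p x * ?d k y) / ln 2))" if x: "x \<in> X" and y: "y \<in> Y" for x y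
  proof -
    have e1: "p x * (\<Sum>k\<in>K. l k * W k x y) = (\<Sum>k\<in>K. l k * (p x * W k x y))"
      by (simp add: sum_distrib_left algebra_simps)
    have e2: "p x * (\<Sum>x'\<in>X. p x' * (\<Sum>k\<in>K. l k * W k x' y)) = (\<Sum>k\<in>K. l k * (p x * ?d k y))"
      by (simp add: sum_distrib_left algebra_simps sum.swap[of _ X K])
    have dle: "p x * W k x y \<le> ?d k y" if k: "k \<in> K" for k
        by (rule member_le_sum[where f="\<lambda>x'. p x' * W k x' y", OF x]) (use assms k y in auto)
    have dnn: "0 \<le> ?d k y" if k: "k \<in> K" for k
        by (rule sum_nonneg) (use assms k y in auto)
    have cnd: "0 \<le> l k \<and> 0 \<le> p x * W k x y \<and> 0 \<le> p x * ?d k y \<and> (p x * W k x y \<noteq> 0 \<longrightarrow> p x * ?d k y \<noteq> 0)"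
      if k: "k \<in> K" for k
    proof -
      have pw: "0 \<le> p x * W k x y" using assms k x y by auto
      have "0 \<le> p x" using assms x by auto
      moreover have "p x * W k x y \<noteq> 0 \<longrightarrow> 0 < ?d k y" using dle[OF k] pw by (metis mult_eq_0_iff order_less_le order_less_le_trans)
      ultimately show ?thesis using pw dnn[OF k] assms k by auto
    qed
    have "hl (\<Sum>k\<in>K. l k * (p x * W k x y)) (\<Sum>k\<in>K. l k * (p x * ?d k y)) \<le> (\<Sum>k\<in>K. l k * hl (p x * W k x y) (p x * ?d k y))"
      by (rule log_sum_w) (use assms cnd in auto)
    then show ?thesis unfolding e1 e2
      by (simp add: sum_divide_distrib[symmetric] divide_right_mono)
  qed
  have "mutual_info X Y p (\<lambda>x y. \<Sum>k\<in>K. l k * W k x y) \<le> (\<Sum>x\<in>X. \<Sum>y\<in>Y. \<Sum>k\<in>K. l k * (hl (p x * W k x y) (p x * ?d k y) / ln 2))"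
    unfolding MI_alt by (intro sum_mono) (use le in auto)
  also have "\<dots> = (\<Sum>k\<in>K. l k * mutual_info X Y p (W k))"
    unfolding MI_alt by (simp add: sum_distrib_left sum.swap[of _ K])
  finally show ?thesis .
qed


lemma loc_apply_tens:
  assumes "linear T"
  shows "loc_apply T (tens a b) = tens (T a) b"
proof -
  have e: "(\<chi> k. tens a b $ k $ j) = b $ j *\<^sub>R a" for j
    by (simp add: fun_eq_iff vec_eq_iff tens_def mult.commute)
  show ?thesis
    unfolding loc_apply_def apply (simp only: e)
    by (simp add: tens_def vec_eq_iff linear_scale[OF assms] mult.commute)
qed

lemma linear_loc_apply:
  assumes "linear T"
  shows "linear (loc_apply T)"
proof (rule linearI)
  fix x y :: "real^'b^'a" and c :: real
  have e1: "(\<chi> k. (x + y) $ k $ j) = (\<chi> k. x $ k $ j) + (\<chi> k. y $ k $ j)" for j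
    by (simp add: fun_eq_iff vec_eq_iff)
  show "loc_apply T (x + y) = loc_apply T x + loc_apply T y"
    unfolding loc_apply_def apply (simp only: e1)
    by (simp add: vec_eq_iff linear_add[OF assms])
  have e2: "(\<chi> k. (c *\<^sub>R x) $ k $ j) = c *\<^sub>R (\<chi> k. x $ k $ j)" for j
    by (simp add: fun_eq_iff vec_eq_iff)
  show "loc_apply T (c *\<^sub>R x) = c *\<^sub>R loc_apply T x"
    unfolding loc_apply_def apply (simp only: e2)
    by (simp add: vec_eq_iff linear_scale[OF assms])
qed

lemma inner_tens:
  fixes E :: "real^'b^'a"
  shows "E \<bullet> tens w b = (\<chi> i. \<Sum>j\<in>UNIV. E $ i $ j * b $ j) \<bullet> w"
  by (simp add: inner_vec_def tens_def sum_distrib_left algebra_simps)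


lemma MI_cong:
  assumes "\<forall>x\<in>X. \<forall>y\<in>Y. q x y = q' x y"
  shows "mutual_info X Y p q = mutual_info X Y p q'"
  unfolding mutual_info_def using assms by (intro sum.cong refl) auto

lemma conv_le_ereal:
  fixes u f :: "'k \<Rightarrow> real"
  assumes "finite S" "\<forall>v\<in>S. 0 \<le> u v" "sum u S = 1" "\<forall>v\<in>S. ereal (f v) \<le> c"
  shows "ereal (\<Sum>v\<in>S. u v * f v) \<le> c"
proof -
  obtain v0 where v0: "v0 \<in> S" using assms(3) by (metis sum.empty zero_neq_one equals0I)
  show ?thesis
  proof (cases c)
    case (real r)
    have "(\<Sum>v\<in>S. u v * f v) \<le> (\<Sum>v\<in>S. u v * r)"
      by (rule sum_mono) (use assms real in \<open>auto intro: mult_left_mono\<close>)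
    also have "\<dots> = r" using assms(3) by (simp add: sum_distrib_right[symmetric])
    finally show ?thesis using real by simp
  next
    case PInf then show ?thesis by simp
  next
    case MInf then show ?thesis using assms(4) v0 by auto
  qed
qed

lemma sum_unit_option: "(\<Sum>j\<in>UNIV. (unit_eff :: real^('b::finite option)) $ j * (b::real^('b option)) $ j) = b $ None"
proof -
  have "(\<Sum>j\<in>UNIV. (unit_eff :: real^('b option)) $ j * b $ j) = (\<Sum>j\<in>UNIV. if j = None then b $ j else 0)"
    by (intro sum.cong) (auto simp: unit_eff_def)
  also have "\<dots> = b $ None" by simp
  finally show ?thesis .
qed

theorem proposition4:
  fixes RA :: "(real^'a) set" and RB :: "(real^'b) set"
    and \<Omega>AB :: "(real^('b option)^('a option)) set"
    and TT :: "(real^('a option) \<Rightarrow> real^('a option)) set"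
  assumes "compact RA" "convex RA" "compact RB" "convex RB"
    and "\<Omega>AB = min_tensor (gpt_state_space RA) (gpt_state_space RB)"
    and "TT \<subseteq> allowed_local (gpt_state_space RA) \<Omega>AB"
  shows "dense_coding_capacity_space \<Omega>AB TT \<le> classical_capacity (gpt_state_space RA)"
proof -
  let ?A = "gpt_state_space RA" and ?B = "gpt_state_space RB"
  let ?G = "{tens a b | a b. a \<in> ?A \<and> b \<in> ?B}"
  let ?cc = "classical_capacity ?A"
  have gen: "tens a b \<in> \<Omega>AB" if "a \<in> ?A" "b \<in> ?B" for a b
    unfolding assms(5) min_tensor_def by (rule hull_inc) (use that in blast)
  have key: "ereal (mutual_info X Y p (\<lambda>x y. E y \<bullet> loc_apply (T x) \<phi>)) \<le> ?cc"
    if phi: "\<phi> \<in> \<Omega>AB" and pd: "is_distribution X p" and TX: "\<forall>x\<in>X. T x \<in> TT"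
      and EM: "is_measurement \<Omega>AB (tens unit_eff unit_eff) Y E" for \<phi> X p T Y E
  proof -
    have finX: "finite X" and p0: "\<forall>x\<in>X. 0 \<le> p x" using pd by (auto simp: is_distribution_def)
    have finY: "finite Y" and Eeff: "\<forall>y\<in>Y. E y \<in> effects \<Omega>AB" and Esum: "sum E Y = tens unit_eff unit_eff"
      using EM by (auto simp: is_measurement_def)
    have linT: "linear (T x)" and TA: "T x ` ?A \<subseteq> ?A" if "x \<in> X" for x
      using TX that assms(6) by (auto simp: allowed_local_def)
    obtain S u where S: "finite S" "S \<subseteq> ?G" "\<forall>v\<in>S. 0 \<le> u v" "sum u S = 1"
      and phiS: "\<phi> = (\<Sum>v\<in>S. u v *\<^sub>R v)"
      using phi unfolding assms(5) min_tensor_def convex_hull_explicit by blast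
    have "\<forall>v\<in>S. \<exists>a b. v = tens a b \<and> a \<in> ?A \<and> b \<in> ?B" using S(2) by blast
    then obtain fa fb where fab: "\<forall>v\<in>S. v = tens (fa v) (fb v) \<and> fa v \<in> ?A \<and> fb v \<in> ?B" by metis
    define e where "e v y = (\<chi> i. \<Sum>j\<in>UNIV. E y $ i $ j * fb v $ j)" for v y
    define W where "W v x y = e v y \<bullet> T x (fa v)" for v x y
    have We: "W v x y = E y \<bullet> tens (T x (fa v)) (fb v)" for v x y
      unfolding W_def e_def inner_tens ..
    have W01: "0 \<le> W v x y \<and> W v x y \<le> 1" if "v \<in> S" "x \<in> X" "y \<in> Y" for v x y
    proof -
      have "T x (fa v) \<in> ?A" using TA[OF that(2)] fab that(1) by blast
      hence "tens (T x (fa v)) (fb v) \<in> \<Omega>AB" using gen fab that(1) by blast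
      thus ?thesis unfolding We using Eeff that(3) by (auto simp: effects_def)
    qed
    have eq: "E y \<bullet> loc_apply (T x) \<phi> = (\<Sum>v\<in>S. u v * W v x y)" if "x \<in> X" for x y
    proof -
      have "loc_apply (T x) \<phi> = (\<Sum>v\<in>S. u v *\<^sub>R tens (T x (fa v)) (fb v))"
      proof -
        have "loc_apply (T x) \<phi> = (\<Sum>v\<in>S. u v *\<^sub>R loc_apply (T x) v)"
          unfolding phiS using linear_loc_apply[OF linT[OF that]]
          by (simp add: linear_sum[OF linear_loc_apply[OF linT[OF that]]] linear_scale[OF linear_loc_apply[OF linT[OF that]]] o_def)
        also have "\<dots> = (\<Sum>v\<in>S. u v *\<^sub>R tens (T x (fa v)) (fb v))"
        proof (rule sum.cong[OF refl])
          fix v assume "v \<in> S"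
          hence vt: "v = tens (fa v) (fb v)" using fab by blast
          have "loc_apply (T x) v = tens (T x (fa v)) (fb v)"
            using loc_apply_tens[OF linT[OF that], of "fa v" "fb v"] vt by metis
          thus "u v *\<^sub>R loc_apply (T x) v = u v *\<^sub>R tens (T x (fa v)) (fb v)"
            using loc_apply_tens[OF linT[OF that]] by simp
        qed
        finally show ?thesis .
      qed
      thus ?thesis by (simp add: inner_sum_right We)
    qed
    have "mutual_info X Y p (\<lambda>x y. E y \<bullet> loc_apply (T x) \<phi>) = mutual_info X Y p (\<lambda>x y. \<Sum>v\<in>S. u v * W v x y)"
      by (rule MI_cong) (use eq in auto)
    also have "\<dots> \<le> (\<Sum>v\<in>S. u v * mutual_info X Y p (W v))"
      by (rule MI_convex) (use finX finY S p0 W01 in auto)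
    finally have le1: "mutual_info X Y p (\<lambda>x y. E y \<bullet> loc_apply (T x) \<phi>) \<le> (\<Sum>v\<in>S. u v * mutual_info X Y p (W v))" .
    have each: "ereal (mutual_info X Y p (W v)) \<le> ?cc" if v: "v \<in> S" for v
    proof -
      have st: "\<forall>x\<in>X. T x (fa v) \<in> ?A" using TA fab v by blast
      have eff: "e v y \<in> effects ?A" if "y \<in> Y" for y
      proof -
        { fix w assume "w \<in> ?A"
          hence "tens w (fb v) \<in> \<Omega>AB" using gen fab v by blast
          hence "0 \<le> e v y \<bullet> w \<and> e v y \<bullet> w \<le> 1"
            using Eeff that unfolding e_def inner_tens[symmetric] by (auto simp: effects_def) }
        thus ?thesis by (auto simp: effects_def)
      qed
      have fbN: "fb v $ None = 1" using fab v by (auto simp: gpt_state_space_def)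
      have "sum (e v) Y = unit_eff"
      proof -
        have "(sum (e v) Y) $ i = unit_eff $ i" for i
        proof -
          have "(sum (e v) Y) $ i = (\<Sum>y\<in>Y. \<Sum>j\<in>UNIV. E y $ i $ j * fb v $ j)"
            by (simp add: sum_component e_def)
          also have "\<dots> = (\<Sum>j\<in>UNIV. (\<Sum>y\<in>Y. E y $ i $ j) * fb v $ j)"
            by (simp add: sum.swap[of _ Y] sum_distrib_right)
          also have "\<dots> = (\<Sum>j\<in>UNIV. (sum E Y) $ i $ j * fb v $ j)"
            by (simp add: sum_component)
          also have "\<dots> = (\<Sum>j\<in>UNIV. unit_eff $ i * (unit_eff $ j * fb v $ j))"
            unfolding Esum by (simp add: tens_def mult.assoc)
          also have "\<dots> = unit_eff $ i"
            by (simp add: sum_distrib_left[symmetric] sum_unit_option fbN)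
          finally show ?thesis .
        qed
        thus ?thesis by (simp add: vec_eq_iff)
      qed
      hence meas: "is_measurement ?A unit_eff Y (e v)"
        using finY eff by (auto simp: is_measurement_def)
      have "ereal (mutual_info X Y p (W v)) \<in> {ereal (mutual_info X Y p (\<lambda>x y. e y \<bullet> \<omega> x)) | X Y p \<omega> e.
      is_distribution X p \<and> (\<forall>x\<in>X. \<omega> x \<in> ?A) \<and> is_measurement ?A unit_eff Y e}"
        unfolding W_def mem_Collect_eq
        apply (rule exI[of _ X], rule exI[of _ Y], rule exI[of _ p], rule exI[of _ "\<lambda>x. T x (fa v)"], rule exI[of _ "e v"])
        using pd st meas by simp
      thus ?thesis unfolding classical_capacity_def by (rule Sup_upper)
    qed
    have "ereal (\<Sum>v\<in>S. u v * mutual_info X Y p (W v)) \<le> ?cc"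
      by (rule conv_le_ereal) (use S each in auto)
    with le1 show ?thesis by (meson ereal_less_eq(3) order_trans)
  qed
  show ?thesis
    unfolding dense_coding_capacity_space_def dense_coding_capacity_def
    by (intro SUP_least Sup_least) (use key in blast)
qed

end
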